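(* Let $(F_i)_{i\in\mathbb{Z}}$ be a sequence of $2\times 2$ matrices with non-negative integer entries and determinant $1$, acting on the 2-torus $\mathbb{T}^2=\mathbb{R}^2/\mathbb{Z}^2$ (flat metric inherited from $\mathbb{R}^2$) by multiplication on column vectors, and suppose each $F_i$ is factored as $$F_i=\begin{pmatrix}1&0\\ n_{i,k_i}&1\end{pmatrix}\begin{pmatrix}1&n_{i,k_i-1}\\ 0&1\end{pmatrix}\cdots\begin{pmatrix}1&0\\ n_{i,2}&1\end{pmatrix}\begin{pmatrix}1&n_{i,1}\\ 0&1\end{pmatrix}$$ with non-negative integers $n_{i,1},\dots,n_{i,k_i}$. If $n_{i,k_i}\neq 0$ and $n_{i,1}\neq 0$ for every $i\in\mathbb{Z}$, then $(F_i)_{i\in\mathbb{Z}}$ is an Anosov family on $\mathbb{T}^2$.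
   Context: An Anosov family on a sequence of compact Riemannian manifolds $(M_i)_{i\in\mathbb{Z}}$ (here all equal to $\mathbb{T}^2$) with diffeomorphisms $f_i:M_i\to M_{i+1}$ is one for which the tangent bundle has a continuous splitting $E^s\oplus E^u$ invariant under the derivatives and there are $\lambda\in(0,1)$, $c>0$ with $\|D(f_{i+n-1}\circ\cdots\circ f_i)v\|\le c\lambda^n\|v\|$ for $v\in E^s$ and $\|D(f_{i-n}^{-1}\circ\cdots\circ f_{i-1}^{-1})v\|\le c\lambda^n\|v\|$ for $v\in E^u$, for all $i\in\mathbb{Z}$, $n\ge 1$. *)

theory Defs
  imports "HOL-Analysis.Analysis"
begin

text \<open>The torus T^2 = R^2/Z^2 is represented by R^2 together with Z^2-periodicity of
  all point-dependent data; the tangent space at every point is R^2 with the flat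
  (Euclidean) metric, and the derivative of the torus map induced by an integer
  matrix A is A itself at every point.\<close>

definition upper_elem :: "nat \<Rightarrow> real^2^2" where
  "upper_elem m = (\<chi> a b. if a = b then 1 else if a = 1 \<and> b = 2 then real m else 0)"

definition lower_elem :: "nat \<Rightarrow> real^2^2" where
  "lower_elem m = (\<chi> a b. if a = b then 1 else if a = 2 \<and> b = 1 then real m else 0)"

definition elem_factor :: "nat \<Rightarrow> nat \<Rightarrow> real^2^2" where
  "elem_factor j m = (if odd j then upper_elem m else lower_elem m)"

fun factor_prod :: "(nat \<Rightarrow> nat) \<Rightarrow> nat \<Rightarrow> real^2^2" where
  "factor_prod ns 0 = mat 1"
| "factor_prod ns (Suc j) = elem_factor (Suc j) (ns (Suc j)) ** factor_prod ns j"

text \<open>Forward cocycle: A(i+n-1) ** ... ** A(i); derivative of f_{i+n-1} o ... o f_i.\<close>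
fun fwd_cocycle :: "(int \<Rightarrow> real^2^2) \<Rightarrow> int \<Rightarrow> nat \<Rightarrow> real^2^2" where
  "fwd_cocycle A i 0 = mat 1"
| "fwd_cocycle A i (Suc n) = A (i + int n) ** fwd_cocycle A i n"

text \<open>Backward cocycle: A(i-n)^-1 ** ... ** A(i-1)^-1;
  derivative of f_{i-n}^-1 o ... o f_{i-1}^-1.\<close>
fun bwd_cocycle :: "(int \<Rightarrow> real^2^2) \<Rightarrow> int \<Rightarrow> nat \<Rightarrow> real^2^2" where
  "bwd_cocycle A i 0 = mat 1"
| "bwd_cocycle A i (Suc n) = matrix_inv (A (i - int (Suc n))) ** bwd_cocycle A i n"

definition integer_vec :: "real^2 \<Rightarrow> bool" where
  "integer_vec z \<longleftrightarrow> (\<forall>j. z $ j \<in> \<int>)"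

definition split_proj :: "(real^2) set \<Rightarrow> (real^2) set \<Rightarrow> real^2 \<Rightarrow> real^2" where
  "split_proj S U v = (THE a. a \<in> S \<and> v - a \<in> U)"

text \<open>Anosov family for the sequence of torus diffeomorphisms x \<mapsto> A i x mod Z^2
  (A i integer matrices with det = +-1). Es i x, Eu i x are the stable/unstable
  subspaces of the tangent space at the point [x] of the i-th copy of T^2.\<close>
definition anosov_family_torus :: "(int \<Rightarrow> real^2^2) \<Rightarrow> bool" where
  "anosov_family_torus A \<longleftrightarrow>
    (\<forall>i. (\<forall>a b. A i $ a $ b \<in> \<int>) \<and> \<bar>det (A i)\<bar> = 1) \<and>
    (\<exists>Es Eu :: int \<Rightarrow> real^2 \<Rightarrow> (real^2) set.
       (\<forall>i x. subspace (Es i x) \<and> subspace (Eu i x) \<and>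
              Es i x \<inter> Eu i x = {0} \<and> (\<forall>v. \<exists>a\<in>Es i x. \<exists>b\<in>Eu i x. v = a + b)) \<and>
       (\<forall>i x z. integer_vec z \<longrightarrow> Es i (x + z) = Es i x \<and> Eu i (x + z) = Eu i x) \<and>
       (\<forall>i v. continuous_on UNIV (\<lambda>x. split_proj (Es i x) (Eu i x) v)) \<and>
       (\<forall>i x. (\<lambda>v. A i *v v) ` Es i x = Es (i + 1) (A i *v x) \<and>
              (\<lambda>v. A i *v v) ` Eu i x = Eu (i + 1) (A i *v x)) \<and>
       (\<exists>lam c::real. 0 < lam \<and> lam < 1 \<and> 0 < c \<and>
          (\<forall>i x n v. 1 \<le> n \<longrightarrow> v \<in> Es i x \<longrightarrow>
              norm (fwd_cocycle A i n *v v) \<le> c * lam ^ n * norm v) \<and>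
          (\<forall>i x n v. 1 \<le> n \<longrightarrow> v \<in> Eu i x \<longrightarrow>
              norm (bwd_cocycle A i n *v v) \<le> c * lam ^ n * norm v)))"

end

theory Submission
  imports Defs
begin
lemma mv1: "((A::real^2^2) *v v) $ 1 = A$1$1 * v$1 + A$1$2 * (v$2::real)"
  by (simp add: matrix_vector_mult_def sum_2)
lemma mv2: "((A::real^2^2) *v v) $ 2 = A$2$1 * v$1 + A$2$2 * (v$2::real)"
  by (simp add: matrix_vector_mult_def sum_2)
lemma mm: "((A::real^2^2) ** B) $ i $ j = A$i$1 * B$1$j + A$i$2 * (B$2$j::real)"
  by (simp add: matrix_matrix_mult_def sum_2)
lemma vec2_eq: "(v::real^2) = w \<longleftrightarrow> v$1 = w$1 \<and> v$2 = w$2"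
  by (simp add: vec_eq_iff forall_2)
lemma mat2_eq: "(A::real^2^2) = B \<longleftrightarrow> A$1$1 = B$1$1 \<and> A$1$2 = B$1$2 \<and> A$2$1 = B$2$1 \<and> A$2$2 = B$2$2"
  by (simp add: vec_eq_iff forall_2)
lemma mat1_e: "(mat 1 :: real^2^2)$1$1 = 1" "(mat 1 :: real^2^2)$2$2 = 1" "(mat 1 :: real^2^2)$1$2 = 0" "(mat 1 :: real^2^2)$2$1 = 0"
  by (simp_all add: mat_def)
lemma up_e: "upper_elem m $1$1 = 1" "upper_elem m $2$2 = 1" "upper_elem m $1$2 = real m" "upper_elem m $2$1 = 0"
  by (simp_all add: upper_elem_def)
lemma lo_e: "lower_elem m $1$1 = 1" "lower_elem m $2$2 = 1" "lower_elem m $1$2 = 0" "lower_elem m $2$1 = real m"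
  by (simp_all add: lower_elem_def)

lemma fp_inv: "factor_prod ns j $1$1 \<ge> 1 \<and> factor_prod ns j $2$2 \<ge> 1 \<and> factor_prod ns j $1$2 \<ge> 0
   \<and> factor_prod ns j $2$1 \<ge> 0 \<and> (j \<ge> 1 \<longrightarrow> factor_prod ns j $1$2 \<ge> real (ns 1))"
proof (induction j)
  case 0
  then show ?case by (simp add: mat1_e)
next
  case (Suc j)
  let ?P = "factor_prod ns j"
  show ?case
  proof (cases "odd (Suc j)")
    case True
    have e: "factor_prod ns (Suc j) = upper_elem (ns (Suc j)) ** ?P" using True by (simp add: elem_factor_def)
    show ?thesis
    proof (cases "j = 0")
      case True
      then show ?thesis by (simp add: mm up_e mat1_e elem_factor_def)
    next
      case False
      then show ?thesis using Suc.IH unfolding e mm up_e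
        by (simp add: add_increasing2)
    qed
  next
    case False
    have e: "factor_prod ns (Suc j) = lower_elem (ns (Suc j)) ** ?P" using False by (simp add: elem_factor_def)
    have j: "j \<ge> 1" using False by (cases j) auto
    show ?thesis using Suc.IH j unfolding e mm lo_e
      by (simp add: add_increasing)
  qed
qed

lemma fp_low: assumes "even k" "0 < k" "ns k \<noteq> 0"
  shows "factor_prod ns k $2$1 \<ge> 1"
proof -
  obtain j where k: "k = Suc j" using assms by (cases k) auto
  have e: "factor_prod ns k = lower_elem (ns k) ** factor_prod ns j" using assms k by (simp add: elem_factor_def)
  have "real (ns k) \<ge> 1" using assms by simp
  moreover have "factor_prod ns j $1$1 \<ge> 1" "factor_prod ns j $2$1 \<ge> 0" using fp_inv by blast+
  ultimately show ?thesis unfolding e mm lo_e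
    by (smt (verit) mult_left_mono mult_cancel_left1)
qed

definition Cone :: "real \<Rightarrow> (real^2) set" where "Cone s = {w. 0 \<le> s * (w$1 * w$2)}"
definition l1 :: "real^2 \<Rightarrow> real" where "l1 w = \<bar>w$1\<bar> + \<bar>w$2\<bar>"
definition adj2 :: "real^2^2 \<Rightarrow> real^2^2" where
  "adj2 A = (\<chi> i j. if i = 1 \<and> j = 1 then A$2$2 else if i = 1 \<and> j = 2 then - A$1$2
     else if i = 2 \<and> j = 1 then - A$2$1 else A$1$1)"
lemma adj_e: "adj2 A $1$1 = A$2$2" "adj2 A $1$2 = - A$1$2" "adj2 A $2$1 = - A$2$1" "adj2 A $2$2 = A$1$1"
  by (simp_all add: adj2_def)

lemma ge1a: "0 \<le> x \<Longrightarrow> 1 \<le> a \<Longrightarrow> x \<le> a * (x::real)"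
  using mult_right_mono[of 1 a x] by simp
lemma ge1b: "x \<le> 0 \<Longrightarrow> 1 \<le> a \<Longrightarrow> a * x \<le> (x::real)"
  using mult_right_mono_neg[of 1 a x] by simp

lemma cone_pos:
  fixes A :: "real^2^2"
  assumes "A$1$1 \<ge> 1" "A$1$2 \<ge> 1" "A$2$1 \<ge> 1" "A$2$2 \<ge> 1" and w: "w \<in> Cone 1"
  shows "A *v w \<in> Cone 1 \<and> 2 * l1 w \<le> l1 (A *v w)"
proof -
  have "w$1 * w$2 \<ge> 0" using w by (simp add: Cone_def)
  then consider "w$1 \<ge> 0" "w$2 \<ge> 0" | "w$1 \<le> 0" "w$2 \<le> 0"
    by (meson zero_le_mult_iff)
  then show ?thesis
  proof cases
    case 1
    have "A$1$1 * w$1 \<ge> w$1" "A$2$1 * w$1 \<ge> w$1" "A$1$2 * w$2 \<ge> w$2" "A$2$2 * w$2 \<ge> w$2"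
      using 1 assms by (auto intro: ge1a ge1b)
    then have "(A *v w)$1 \<ge> 0" "(A *v w)$2 \<ge> 0" "(A *v w)$1 + (A *v w)$2 \<ge> 2 * (w$1 + w$2)"
      using 1 by (simp_all add: mv1 mv2)
    then show ?thesis using 1 unfolding Cone_def l1_def by simp
  next
    case 2
    have "A$1$1 * w$1 \<le> w$1" "A$2$1 * w$1 \<le> w$1" "A$1$2 * w$2 \<le> w$2" "A$2$2 * w$2 \<le> w$2"
      using 2 assms by (auto intro: ge1a ge1b)
    then have "(A *v w)$1 \<le> 0" "(A *v w)$2 \<le> 0" "(A *v w)$1 + (A *v w)$2 \<le> 2 * (w$1 + w$2)"
      using 2 by (simp_all add: mv1 mv2)
    then show ?thesis using 2 unfolding Cone_def l1_def by (simp add: mult_nonpos_nonpos)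
  qed
qed

lemma cone_neg:
  fixes A :: "real^2^2"
  assumes "A$1$1 \<ge> 1" "A$1$2 \<ge> 1" "A$2$1 \<ge> 1" "A$2$2 \<ge> 1" and w: "w \<in> Cone (-1)"
  shows "adj2 A *v w \<in> Cone (-1) \<and> 2 * l1 w \<le> l1 (adj2 A *v w)"
proof -
  have "w$1 * w$2 \<le> 0" using w by (simp add: Cone_def)
  then consider "w$1 \<ge> 0" "w$2 \<le> 0" | "w$1 \<le> 0" "w$2 \<ge> 0"
    by (meson mult_le_0_iff)
  then show ?thesis
  proof cases
    case 1
    have "A$2$2 * w$1 \<ge> w$1" "A$2$1 * w$1 \<ge> w$1" "A$1$2 * w$2 \<le> w$2" "A$1$1 * w$2 \<le> w$2"
      using 1 assms by (auto intro: ge1a ge1b)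
    then have "(adj2 A *v w)$1 \<ge> 0" "(adj2 A *v w)$2 \<le> 0" "(adj2 A *v w)$1 - (adj2 A *v w)$2 \<ge> 2 * (w$1 - w$2)"
      using 1 by (simp_all add: mv1 mv2 adj_e)
    then show ?thesis using 1 unfolding Cone_def l1_def by (simp add: mult_nonneg_nonpos)
  next
    case 2
    have "A$2$2 * w$1 \<le> w$1" "A$2$1 * w$1 \<le> w$1" "A$1$2 * w$2 \<ge> w$2" "A$1$1 * w$2 \<ge> w$2"
      using 2 assms by (auto intro: ge1a ge1b)
    then have "(adj2 A *v w)$1 \<le> 0" "(adj2 A *v w)$2 \<ge> 0" "(adj2 A *v w)$1 - (adj2 A *v w)$2 \<le> 2 * (w$1 - w$2)"
      using 2 by (simp_all add: mv1 mv2 adj_e)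
    then show ?thesis using 2 unfolding Cone_def l1_def by (simp add: mult_nonpos_nonneg)
  qed
qed

lemma adj_inv:
  fixes A :: "real^2^2"
  assumes "A$1$1 * A$2$2 - A$1$2 * A$2$1 = 1"
  shows "A ** adj2 A = mat 1" "adj2 A ** A = mat 1" "matrix_inv A = adj2 A"
proof -
  show 1: "A ** adj2 A = mat 1" using assms by (simp add: mat2_eq mm adj_e mat1_e algebra_simps)
  show 2: "adj2 A ** A = mat 1" using assms by (simp add: mat2_eq mm adj_e mat1_e algebra_simps)
  have "\<exists>B. A ** B = mat 1 \<and> B ** A = mat 1" using 1 2 by blast
  then have "A ** matrix_inv A = mat 1 \<and> matrix_inv A ** A = mat 1"
    unfolding matrix_inv_def by (rule someI_ex)
  then have "matrix_inv A = matrix_inv A ** (A ** adj2 A)" using 1 by (simp add: matrix_mul_rid)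
  also have "\<dots> = adj2 A" using \<open>A ** matrix_inv A = mat 1 \<and> matrix_inv A ** A = mat 1\<close>
    by (simp add: matrix_mul_assoc matrix_mul_lid)
  finally show "matrix_inv A = adj2 A" .
qed

fun cocyc :: "(nat \<Rightarrow> real^2^2) \<Rightarrow> nat \<Rightarrow> real^2^2" where
  "cocyc M 0 = mat 1"
| "cocyc M (Suc n) = M n ** cocyc M n"

lemma cocyc_suc_v: "cocyc M (Suc n) *v v = M n *v (cocyc M n *v v)"
  by (simp add: matrix_vector_mul_assoc)

lemma cone_scale: "w \<in> Cone s \<Longrightarrow> c *\<^sub>R w \<in> Cone s"
  unfolding Cone_def
proof -
  assume "w \<in> {w. 0 \<le> s * (w $ 1 * w $ 2)}"
  then have "0 \<le> s * (w $ 1 * w $ 2)" by simp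
  then have "0 \<le> (c*c) * (s * (w $ 1 * w $ 2))" by simp
  then show "c *\<^sub>R w \<in> {w. 0 \<le> s * (w $ 1 * w $ 2)}" by (simp add: algebra_simps)
qed

lemma zero_cone: "0 \<in> Cone s" by (simp add: Cone_def)

lemma l1_pos: "v \<noteq> 0 \<Longrightarrow> l1 v > 0"
  unfolding l1_def using vec2_eq[of v 0] by auto

lemma cone_cases: "s = 1 \<or> s = -1 \<Longrightarrow> w \<notin> Cone s \<Longrightarrow> w \<in> Cone (-s)"
  unfolding Cone_def by auto

definition pt :: "real \<Rightarrow> real \<Rightarrow> real^2" where "pt s t = vector [t, s * (1 - t)]"
lemma pt_c: "pt s t $ 1 = t" "pt s t $ 2 = s * (1 - t)" by (simp_all add: pt_def)

lemma frac01: fixes a b :: real assumes "0 \<le> a*b" "a + b \<noteq> 0" shows "0 \<le> a/(a+b) \<and> a/(a+b) \<le> 1"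
proof -
  have "(0 \<le> a \<and> 0 \<le> b) \<or> (a \<le> 0 \<and> b \<le> 0)" using assms(1) by (auto simp: zero_le_mult_iff)
  then show ?thesis using assms(2) by (auto simp: divide_le_eq_1 zero_le_divide_iff)
qed

locale cseq =
  fixes M N :: "nat \<Rightarrow> real^2^2" and s :: real
  assumes sig: "s = 1 \<or> s = -1"
    and MN: "\<And>n. M n ** N n = mat 1"
    and NM: "\<And>n. N n ** M n = mat 1"
    and H2: "\<And>n w. w \<in> Cone s \<Longrightarrow> N n *v w \<in> Cone s \<and> 2 * l1 w \<le> l1 (N n *v w)"
    and H3: "\<And>n w. w \<in> Cone (-s) \<Longrightarrow> M n *v w \<in> Cone (-s) \<and> 2 * l1 w \<le> l1 (M n *v w)"
begin

lemma back1: "cocyc M (Suc n) *v v \<in> Cone s \<Longrightarrow> cocyc M n *v v \<in> Cone s"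
proof -
  assume a: "cocyc M (Suc n) *v v \<in> Cone s"
  have "cocyc M n *v v = N n *v (cocyc M (Suc n) *v v)"
    by (simp add: matrix_vector_mul_assoc matrix_mul_assoc NM)
  then show ?thesis using H2[OF a] by simp
qed

lemma down: "m \<le> n \<Longrightarrow> cocyc M n *v v \<in> Cone s \<Longrightarrow> cocyc M m *v v \<in> Cone s"
proof (induction n rule: dec_induct)
  case base
  then show ?case by simp
next
  case (step n)
  then show ?case using back1 by blast
qed

lemma grow: "cocyc M m *v v \<in> Cone (-s) \<Longrightarrow>
  cocyc M (m + d) *v v \<in> Cone (-s) \<and> 2^d * l1 (cocyc M m *v v) \<le> l1 (cocyc M (m + d) *v v)"
proof (induction d)
  case 0
  then show ?case by simp
next
  case (Suc d)
  then have a: "cocyc M (m + d) *v v \<in> Cone (-s)" and b: "2^d * l1 (cocyc M m *v v) \<le> l1 (cocyc M (m + d) *v v)"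
    by auto
  have e: "cocyc M (m + Suc d) *v v = M (m + d) *v (cocyc M (m + d) *v v)"
    using cocyc_suc_v[of M "m+d" v] by simp
  show ?case unfolding e using H3[OF a, of "m+d"] b by simp
qed

lemma bdd_cone: assumes "\<forall>n. l1 (cocyc M n *v v) \<le> B" shows "cocyc M m *v v \<in> Cone s"
proof (rule ccontr)
  assume "cocyc M m *v v \<notin> Cone s"
  then have c: "cocyc M m *v v \<in> Cone (-s)" using cone_cases sig by blast
  have "cocyc M m *v v \<noteq> 0" using \<open>cocyc M m *v v \<notin> Cone s\<close> zero_cone by metis
  then have p: "l1 (cocyc M m *v v) > 0" by (rule l1_pos)
  obtain d :: nat where d: "B / l1 (cocyc M m *v v) < real d" using reals_Archimedean2 by blast
  have "real d \<le> 2^d" by (metis less_exp of_nat_le_iff of_nat_numeral of_nat_power less_imp_le)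
  then have "B < 2^d * l1 (cocyc M m *v v)" using d p
    by (smt (verit, ccfv_SIG) mult_right_mono pos_divide_less_eq)
  also have "\<dots> \<le> l1 (cocyc M (m + d) *v v)" using grow[OF c] by blast
  finally show False using assms by (meson not_le)
qed

lemma bdd_zero: assumes "\<forall>n. l1 (cocyc M n *v v) \<le> B" and "v \<in> Cone (-s)" shows "v = 0"
proof (rule ccontr)
  assume "v \<noteq> 0"
  have "cocyc M 0 *v v \<in> Cone s" using bdd_cone[OF assms(1)] .
  then have "v \<in> Cone s" by simp
  then have p: "l1 v > 0" using l1_pos \<open>v \<noteq> 0\<close> by blast
  obtain d :: nat where d: "B / l1 v < real d" using reals_Archimedean2 by blast
  have "real d \<le> 2^d" by (metis less_exp of_nat_le_iff of_nat_numeral of_nat_power less_imp_le)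
  then have "B < 2^d * l1 v" using d p
    by (smt (verit, ccfv_SIG) mult_right_mono pos_divide_less_eq)
  also have "\<dots> \<le> l1 (cocyc M (0 + d) *v v)" using grow[of 0 v d] assms(2) by simp
  finally show False using assms by (meson not_le)
qed

lemma contr: assumes "\<forall>n. cocyc M n *v v \<in> Cone s" shows "l1 (cocyc M n *v v) \<le> (1/2)^n * l1 v"
proof (induction n)
  case 0
  then show ?case by simp
next
  case (Suc n)
  have "cocyc M n *v v = N n *v (cocyc M (Suc n) *v v)"
    by (simp add: matrix_vector_mul_assoc matrix_mul_assoc NM)
  then have "2 * l1 (cocyc M (Suc n) *v v) \<le> l1 (cocyc M n *v v)"
    using H2[OF assms[rule_format, of "Suc n"]] by simp
  then show ?case using Suc by simp
qed


lemma pre: "w \<in> Cone s \<Longrightarrow> \<exists>v. v \<in> Cone s \<and> cocyc M n *v v = w"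
proof (induction n arbitrary: w)
  case 0
  then show ?case by auto
next
  case (Suc n)
  have u: "N n *v w \<in> Cone s" using H2[OF Suc.prems] by blast
  obtain v where v: "v \<in> Cone s" "cocyc M n *v v = N n *v w" using Suc.IH[OF u] by blast
  have "cocyc M (Suc n) *v v = M n *v (N n *v w)" using v cocyc_suc_v[of M n v] by simp
  also have "\<dots> = w" by (simp add: matrix_vector_mul_assoc MN)
  finally show ?case using v by blast
qed

lemma exist: "\<exists>v. v \<noteq> 0 \<and> (\<forall>n. cocyc M n *v v \<in> Cone s)"
proof -
  define S where "S n = {0..1} \<inter> {t::real. 0 \<le> s * ((cocyc M n *v pt s t)$1 * (cocyc M n *v pt s t)$2)}" for n
  have clo: "closed (S n)" for n
    unfolding S_def mv1 mv2 pt_c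
    by (intro closed_Int closed_atLeastAtMost closed_Collect_le continuous_intros)
  have mono: "m \<le> n \<Longrightarrow> S n \<subseteq> S m" for m n
    using down unfolding S_def Cone_def by auto
  have ne: "S n \<noteq> {}" for n
  proof -
    define w0 :: "real^2" where "w0 = vector [1, s]"
    have ss: "s * s = 1" using sig by auto
    have "w0 \<in> Cone s" using ss by (simp add: w0_def Cone_def)
    then obtain v where v: "v \<in> Cone s" "cocyc M n *v v = w0" using pre by blast
    have "v \<noteq> 0"
    proof
      assume "v = 0"
      then have "w0 = 0" using v(2) by simp
      then show False by (simp add: w0_def vec2_eq)
    qed
    define D where "D = v$1 + s * v$2"
    have vv: "0 \<le> v$1 * (s * v$2)" using v(1) by (simp add: Cone_def algebra_simps)
    have D: "D \<noteq> 0"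
    proof
      assume "D = 0"
      then have "s * v$2 = - v$1" by (simp add: D_def)
      then have "v$1 = 0" using vv by (metis mult_minus_right neg_0_le_iff_le not_square_less_zero order.order_iff_strict mult_eq_0_iff neg_le_0_iff_le)
      then have "s * v$2 = 0" using \<open>s * v$2 = - v$1\<close> by simp
      then have "v$2 = 0" using sig by auto
      then show False using \<open>v$1 = 0\<close> \<open>v \<noteq> 0\<close> by (simp add: vec2_eq)
    qed
    define t where "t = v$1 / D"
    have ptv: "pt s t = (1/D) *\<^sub>R v"
    proof -
      have "s * (1 - t) = s * ((D - v$1) / D)" using D by (simp add: t_def field_simps)
      also have "\<dots> = (s * s) * v$2 / D" by (simp add: D_def)
      finally have "s * (1 - t) = v$2 / D" using ss by simp
      then show ?thesis by (simp add: vec2_eq pt_c t_def)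
    qed
    have t01: "0 \<le> t \<and> t \<le> 1" unfolding t_def D_def
      using frac01[OF vv] D by (simp add: D_def)
    have "cocyc M n *v pt s t = (1/D) *\<^sub>R w0" by (simp add: ptv matrix_vector_mult_scaleR v(2))
    then have "cocyc M n *v pt s t \<in> Cone s" using cone_scale[OF \<open>w0 \<in> Cone s\<close>] by simp
    then have "t \<in> S n" using t01 unfolding S_def Cone_def by auto
    then show ?thesis by blast
  qed
  have "{0..1} \<inter> (\<Inter>n\<in>UNIV. S n) \<noteq> {}"
  proof (rule compact_imp_fip_image[OF compact_Icc clo])
    fix I' :: "nat set" assume fin: "finite I'"
    define m where "m = Max (insert 0 I')"
    have "S m \<subseteq> {0..1} \<inter> (\<Inter>i\<in>I'. S i)"
    proof -
      have "i \<in> I' \<Longrightarrow> S m \<subseteq> S i" for i using mono[of i m] fin by (simp add: m_def)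
      moreover have "S m \<subseteq> {0..1}" by (simp add: S_def)
      ultimately show ?thesis by blast
    qed
    then show "{0..1} \<inter> (\<Inter>i\<in>I'. S i) \<noteq> {}" using ne by blast
  qed
  then obtain t where t: "\<And>n. t \<in> S n" by blast
  have "pt s t \<noteq> 0"
  proof
    assume "pt s t = 0"
    then have "t = 0" "s * (1 - t) = 0" by (auto simp: vec2_eq pt_c)
    then show False using sig by auto
  qed
  moreover have "\<forall>n. cocyc M n *v pt s t \<in> Cone s" using t unfolding S_def Cone_def by auto
  ultimately show ?thesis by blast
qed

end

lemma fwd_eq: "fwd_cocycle A i n = cocyc (\<lambda>m. A (i + int m)) n" by (induction n) auto
lemma bwd_eq: "bwd_cocycle A i n = cocyc (\<lambda>m. matrix_inv (A (i - int (Suc m)))) n" by (induction n) auto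

lemma fwd_shift: "fwd_cocycle A (i+1) n *v (A i *v v) = fwd_cocycle A i (Suc n) *v v"
proof (induction n)
  case 0
  then show ?case by (simp add: matrix_vector_mul_assoc)
next
  case (Suc n)
  have "fwd_cocycle A (i+1) (Suc n) *v (A i *v v) = A (i + 1 + int n) *v (fwd_cocycle A (i+1) n *v (A i *v v))"
    by (simp add: matrix_vector_mul_assoc matrix_mul_assoc)
  also have "\<dots> = A (i + int (Suc n)) *v (fwd_cocycle A i (Suc n) *v v)" using Suc by (simp add: add.assoc)
  also have "\<dots> = fwd_cocycle A i (Suc (Suc n)) *v v" by (simp add: matrix_vector_mul_assoc)
  finally show ?case .
qed

lemma bwd_shift: "bwd_cocycle A j (Suc n) *v w = bwd_cocycle A (j-1) n *v (matrix_inv (A (j-1)) *v w)"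
proof (induction n)
  case 0
  then show ?case by simp
next
  case (Suc n)
  have "bwd_cocycle A j (Suc (Suc n)) *v w = matrix_inv (A (j - int (Suc (Suc n)))) *v (bwd_cocycle A j (Suc n) *v w)"
    by (simp only: bwd_cocycle.simps(2) matrix_vector_mul_assoc)
  also have "\<dots> = matrix_inv (A (j - 1 - int (Suc n))) *v (bwd_cocycle A (j-1) n *v (matrix_inv (A (j-1)) *v w))"
    using Suc by (simp add: algebra_simps)
  also have "\<dots> = bwd_cocycle A (j-1) (Suc n) *v (matrix_inv (A (j-1)) *v w)"
    by (simp only: bwd_cocycle.simps(2) matrix_vector_mul_assoc matrix_mul_assoc)
  finally show ?case .
qed

lemma l1_tri: "l1 (x + y) \<le> l1 x + l1 y" unfolding l1_def by (simp add: abs_triangle_ineq add_mono)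
lemma l1_scale: "l1 (c *\<^sub>R x) = \<bar>c\<bar> * l1 x" unfolding l1_def by (simp add: abs_mult algebra_simps)
lemma norm_l1: "norm x \<le> l1 x" using norm_le_l1_cart[of x] by (simp add: sum_2 l1_def)
lemma l1_norm: "l1 x \<le> 2 * norm x" using component_le_norm_cart[of x 1] component_le_norm_cart[of x 2]
  by (simp add: l1_def)

lemma bdd_subspace: "subspace {v. \<exists>B. \<forall>n. l1 ((G n :: real^2^2) *v v) \<le> B}"
  unfolding subspace_def
proof (intro conjI ballI allI)
  show "0 \<in> {v. \<exists>B. \<forall>n. l1 (G n *v v) \<le> B}" by (auto simp: l1_def)
next
  fix x y assume x: "x \<in> {v. \<exists>B. \<forall>n. l1 (G n *v v) \<le> B}" and y: "y \<in> {v. \<exists>B. \<forall>n. l1 (G n *v v) \<le> B}"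
  then obtain B1 B2 where "\<forall>n. l1 (G n *v x) \<le> B1" "\<forall>n. l1 (G n *v y) \<le> B2" by auto
  then have "\<forall>n. l1 (G n *v (x + y)) \<le> B1 + B2"
    by (metis add_mono l1_tri matrix_vector_right_distrib order_trans)
  then show "x + y \<in> {v. \<exists>B. \<forall>n. l1 (G n *v v) \<le> B}" by blast
next
  fix c :: real and x assume x: "x \<in> {v. \<exists>B. \<forall>n. l1 (G n *v v) \<le> B}"
  then obtain B where B: "\<forall>n. l1 (G n *v x) \<le> B" by auto
  have "\<forall>n. l1 (G n *v (c *\<^sub>R x)) \<le> \<bar>c\<bar> * B"
    using B by (simp add: matrix_vector_mult_scaleR l1_scale mult_left_mono)
  then show "c *\<^sub>R x \<in> {v. \<exists>B. \<forall>n. l1 (G n *v v) \<le> B}" by blast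
qed

lemma half_le: "0 \<le> (x::real) \<Longrightarrow> (1/2)^n * x \<le> x"
  by (simp add: mult_left_le_one_le power_le_one)

lemma nat_ge1: "(x::real) \<in> \<nat> \<Longrightarrow> 0 < x \<Longrightarrow> 1 \<le> x"
  by (metis Nats_cases of_nat_0_less_iff of_nat_1 of_nat_le_iff Suc_leI One_nat_def)


theorem corollary3p6:
  fixes F :: "int \<Rightarrow> real^2^2"
    and k :: "int \<Rightarrow> nat"
    and n :: "int \<Rightarrow> nat \<Rightarrow> nat"
  assumes nonneg_int: "\<And>i a b. F i $ a $ b \<in> \<nat>"
    and det1: "\<And>i. det (F i) = 1"
    and k_even: "\<And>i. even (k i)"
    and k_pos: "\<And>i. 0 < k i"
    and factor: "\<And>i. F i = factor_prod (n i) (k i)"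
    and last_nz: "\<And>i. n i (k i) \<noteq> 0"
    and first_nz: "\<And>i. n i 1 \<noteq> 0"
  shows "anosov_family_torus F"
proof -
  have dt: "F i$1$1 * F i$2$2 - F i$1$2 * F i$2$1 = 1" for i using det1[of i] by (simp add: det_2)
  have ent: "F i$1$1 \<ge> 1 \<and> F i$1$2 \<ge> 1 \<and> F i$2$1 \<ge> 1 \<and> F i$2$2 \<ge> 1" for i
  proof -
    have nn: "F i $a$b \<ge> 0" for a b using nonneg_int[of i a b] by (metis Nats_cases of_nat_0_le_iff)
    have b: "F i$1$2 \<ge> 1"
    proof -
      have "factor_prod (n i) (k i) $1$2 \<ge> real (n i 1)" using fp_inv[of "n i" "k i"] k_pos[of i] by simp
      moreover have "real (n i 1) \<ge> 1" using first_nz[of i] by simp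
      ultimately show ?thesis using factor[of i] by simp
    qed
    have c: "F i$2$1 \<ge> 1" using fp_low[of "k i" "n i", OF k_even[of i] k_pos[of i] last_nz[of i]] factor[of i] by simp
    have "F i$1$2 * F i$2$1 \<ge> 1" using b c by (metis mult_mono' nn mult_1 order_trans zero_le_one)
    then have p: "F i$1$1 * F i$2$2 > 0" using dt[of i] by simp
    then have "F i$1$1 > 0" "F i$2$2 > 0" using nn[of 1 1] nn[of 2 2]
      by (auto simp: zero_less_mult_iff)
    then show ?thesis using b c nat_ge1 nonneg_int by blast
  qed
  have adj: "F i ** adj2 (F i) = mat 1" "adj2 (F i) ** F i = mat 1" "matrix_inv (F i) = adj2 (F i)" for i
    using adj_inv[OF dt[of i]] by auto
  have cs1: "cseq (\<lambda>m. F (i + int m)) (\<lambda>m. adj2 (F (i + int m))) (-1)" for i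
    unfolding cseq_def using adj ent cone_pos cone_neg by simp
  have cs2: "cseq (\<lambda>m. matrix_inv (F (i - int (Suc m)))) (\<lambda>m. F (i - int (Suc m))) 1" for i
    unfolding cseq_def using adj ent cone_pos cone_neg by simp
  define Es where "Es i = {v. \<exists>B. \<forall>m. l1 (fwd_cocycle F i m *v v) \<le> B}" for i
  define Eu where "Eu i = {v. \<exists>B. \<forall>m. l1 (bwd_cocycle F i m *v v) \<le> B}" for i
  have Es_sub: "subspace (Es i)" for i unfolding Es_def by (rule bdd_subspace)
  have Eu_sub: "subspace (Eu i)" for i unfolding Eu_def by (rule bdd_subspace)
  have Es_zero: "v \<in> Es i \<Longrightarrow> v \<in> Cone 1 \<Longrightarrow> v = 0" for i v
    using cseq.bdd_zero[OF cs1[of i], of v] unfolding Es_def fwd_eq by auto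
  have Eu_zero: "v \<in> Eu i \<Longrightarrow> v \<in> Cone (-1) \<Longrightarrow> v = 0" for i v
    using cseq.bdd_zero[OF cs2[of i], of v] unfolding Eu_def bwd_eq by auto
  have Es_contr: "v \<in> Es i \<Longrightarrow> l1 (fwd_cocycle F i m *v v) \<le> (1/2)^m * l1 v" for i v m
    using cseq.bdd_cone[OF cs1[of i], of v] cseq.contr[OF cs1[of i], of v m] unfolding Es_def fwd_eq
    by blast
  have Eu_contr: "v \<in> Eu i \<Longrightarrow> l1 (bwd_cocycle F i m *v v) \<le> (1/2)^m * l1 v" for i v m
    using cseq.bdd_cone[OF cs2[of i], of v] cseq.contr[OF cs2[of i], of v m] unfolding Eu_def bwd_eq
    by blast
  have inter: "Es i \<inter> Eu i = {0}" for i
  proof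
    show "{0} \<subseteq> Es i \<inter> Eu i" using Es_sub Eu_sub subspace_0 by blast
    show "Es i \<inter> Eu i \<subseteq> {0}"
    proof
      fix v assume v: "v \<in> Es i \<inter> Eu i"
      show "v \<in> {0}"
      proof (cases "v \<in> Cone 1")
        case True then show ?thesis using Es_zero v by blast
      next
        case False then have "v \<in> Cone (-1)" using cone_cases[of 1 v] by simp
        then show ?thesis using Eu_zero v by blast
      qed
    qed
  qed
  have span: "\<exists>a\<in>Es i. \<exists>b\<in>Eu i. v = a + b" for i v
  proof -
    obtain s0 where s0: "s0 \<noteq> 0" "\<forall>m. cocyc (\<lambda>m. F (i + int m)) m *v s0 \<in> Cone (-1)"
      using cseq.exist[OF cs1[of i]] by blast
    have "s0 \<in> Es i" unfolding Es_def fwd_eq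
    proof (intro CollectI exI allI)
      fix m
      have "l1 (cocyc (\<lambda>m. F (i + int m)) m *v s0) \<le> (1/2)^m * l1 s0" by (rule cseq.contr[OF cs1[of i] s0(2)])
      also have "\<dots> \<le> l1 s0" by (rule half_le) (simp add: l1_def)
      finally show "l1 (cocyc (\<lambda>m. F (i + int m)) m *v s0) \<le> l1 s0" .
    qed
    have "s0 \<notin> Cone 1" using Es_zero \<open>s0 \<in> Es i\<close> s0(1) by blast
    then have sn: "s0$1 * s0$2 < 0" by (simp add: Cone_def)
    obtain u0 where u0: "u0 \<noteq> 0" "\<forall>m. cocyc (\<lambda>m. matrix_inv (F (i - int (Suc m)))) m *v u0 \<in> Cone 1"
      using cseq.exist[OF cs2[of i]] by blast
    have "u0 \<in> Eu i" unfolding Eu_def bwd_eq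
    proof (intro CollectI exI allI)
      fix m
      have "l1 (cocyc (\<lambda>m. matrix_inv (F (i - int (Suc m)))) m *v u0) \<le> (1/2)^m * l1 u0" by (rule cseq.contr[OF cs2[of i] u0(2)])
      also have "\<dots> \<le> l1 u0" by (rule half_le) (simp add: l1_def)
      finally show "l1 (cocyc (\<lambda>m. matrix_inv (F (i - int (Suc m)))) m *v u0) \<le> l1 u0" .
    qed
    have "u0 \<notin> Cone (-1)" using Eu_zero \<open>u0 \<in> Eu i\<close> u0(1) by blast
    then have un: "u0$1 * u0$2 > 0" by (simp add: Cone_def)
    define D where "D = s0$1 * u0$2 - s0$2 * u0$1"
    have D: "D \<noteq> 0"
    proof
      assume "D = 0"
      then have e: "s0$1 * u0$2 = s0$2 * u0$1" by (simp add: D_def)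
      have "(s0$1 * u0$2) * (s0$2 * u0$1) = (s0$1 * s0$2) * (u0$1 * u0$2)" by (simp add: algebra_simps)
      also have "\<dots> < 0" using sn un by (simp add: mult_neg_pos)
      finally show False using e by (metis not_square_less_zero)
    qed
    define \<alpha> where "\<alpha> = (v$1 * u0$2 - v$2 * u0$1) / D"
    define \<beta> where "\<beta> = (s0$1 * v$2 - s0$2 * v$1) / D"
    have "\<alpha> *\<^sub>R s0 \<in> Es i" using Es_sub \<open>s0 \<in> Es i\<close> subspace_scale by blast
    moreover have "\<beta> *\<^sub>R u0 \<in> Eu i" using Eu_sub \<open>u0 \<in> Eu i\<close> subspace_scale by blast
    moreover have "v = \<alpha> *\<^sub>R s0 + \<beta> *\<^sub>R u0"
    proof -
      have n1: "(v$1 * u0$2 - v$2 * u0$1) * s0$1 + (s0$1 * v$2 - s0$2 * v$1) * u0$1 = v$1 * D"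
        unfolding D_def by (simp add: algebra_simps)
      have n2: "(v$1 * u0$2 - v$2 * u0$1) * s0$2 + (s0$1 * v$2 - s0$2 * v$1) * u0$2 = v$2 * D"
        unfolding D_def by (simp add: algebra_simps)
      have "\<alpha> * s0$1 + \<beta> * u0$1 = ((v$1 * u0$2 - v$2 * u0$1) * s0$1 + (s0$1 * v$2 - s0$2 * v$1) * u0$1) / D"
        unfolding \<alpha>_def \<beta>_def by (simp add: add_divide_distrib)
      also have "\<dots> = v$1" using D n1 by simp
      finally have c1: "\<alpha> * s0$1 + \<beta> * u0$1 = v$1" .
      have "\<alpha> * s0$2 + \<beta> * u0$2 = ((v$1 * u0$2 - v$2 * u0$1) * s0$2 + (s0$1 * v$2 - s0$2 * v$1) * u0$2) / D"
        unfolding \<alpha>_def \<beta>_def by (simp add: add_divide_distrib)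
      also have "\<dots> = v$2" using D n2 by simp
      finally have c2: "\<alpha> * s0$2 + \<beta> * u0$2 = v$2" .
      show ?thesis using c1 c2 by (simp add: vec2_eq)
    qed
    ultimately show ?thesis by blast
  qed
  have inv_s: "(\<lambda>v. F i *v v) ` Es i = Es (i + 1)" for i
  proof
    show "(\<lambda>v. F i *v v) ` Es i \<subseteq> Es (i + 1)"
    proof
      fix w assume "w \<in> (\<lambda>v. F i *v v) ` Es i"
      then obtain v B where v: "w = F i *v v" "\<forall>m. l1 (fwd_cocycle F i m *v v) \<le> B" unfolding Es_def by auto
      have "\<forall>m. l1 (fwd_cocycle F (i+1) m *v w) \<le> B" using v fwd_shift by metis
      then show "w \<in> Es (i+1)" unfolding Es_def by blast
    qed
    show "Es (i + 1) \<subseteq> (\<lambda>v. F i *v v) ` Es i"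
    proof
      fix w assume "w \<in> Es (i+1)"
      then obtain B where B: "\<forall>m. l1 (fwd_cocycle F (i+1) m *v w) \<le> B" unfolding Es_def by auto
      define v where "v = adj2 (F i) *v w"
      have w: "w = F i *v v" by (simp add: v_def matrix_vector_mul_assoc adj)
      have "\<forall>m. l1 (fwd_cocycle F i m *v v) \<le> max B (l1 v)"
      proof
        fix m show "l1 (fwd_cocycle F i m *v v) \<le> max B (l1 v)"
        proof (cases m)
          case 0 then show ?thesis by simp
        next
          case (Suc m')
          then show ?thesis using B fwd_shift[of F i m' v] w by (metis max.coboundedI1)
        qed
      qed
      then have "v \<in> Es i" unfolding Es_def by blast
      then show "w \<in> (\<lambda>v. F i *v v) ` Es i" using w by blast
    qed
  qed
  have inv_u: "(\<lambda>v. F i *v v) ` Eu i = Eu (i + 1)" for i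
  proof
    have sh: "bwd_cocycle F (i+1) (Suc m) *v (F i *v v) = bwd_cocycle F i m *v v" for m v
      using bwd_shift[of F "i+1" m "F i *v v"] by (simp add: matrix_vector_mul_assoc adj)
    show "(\<lambda>v. F i *v v) ` Eu i \<subseteq> Eu (i + 1)"
    proof
      fix w assume "w \<in> (\<lambda>v. F i *v v) ` Eu i"
      then obtain v B where v: "w = F i *v v" "\<forall>m. l1 (bwd_cocycle F i m *v v) \<le> B" unfolding Eu_def by auto
      have "\<forall>m. l1 (bwd_cocycle F (i+1) m *v w) \<le> max B (l1 w)"
      proof
        fix m show "l1 (bwd_cocycle F (i+1) m *v w) \<le> max B (l1 w)"
        proof (cases m)
          case 0 then show ?thesis by simp
        next
          case (Suc m')
          then show ?thesis using v sh by (metis max.coboundedI1)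
        qed
      qed
      then show "w \<in> Eu (i+1)" unfolding Eu_def by blast
    qed
    show "Eu (i + 1) \<subseteq> (\<lambda>v. F i *v v) ` Eu i"
    proof
      fix w assume "w \<in> Eu (i+1)"
      then obtain B where B: "\<forall>m. l1 (bwd_cocycle F (i+1) m *v w) \<le> B" unfolding Eu_def by auto
      define v where "v = adj2 (F i) *v w"
      have w: "w = F i *v v" by (simp add: v_def matrix_vector_mul_assoc adj)
      have "\<forall>m. l1 (bwd_cocycle F i m *v v) \<le> B" using B sh w by metis
      then have "v \<in> Eu i" unfolding Eu_def by blast
      then show "w \<in> (\<lambda>v. F i *v v) ` Eu i" using w by blast
    qed
  qed
  have ints: "\<forall>i. (\<forall>a b. F i $ a $ b \<in> \<int>) \<and> \<bar>det (F i)\<bar> = 1"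
    using det1 by (simp add: subsetD[OF Nats_subset_Ints nonneg_int])
  have rate: "norm (G *v v) \<le> 2 * (1/2)^m * norm v" if "l1 (G *v v) \<le> (1/2)^m * l1 v" for G :: "real^2^2" and v m
  proof -
    have "norm (G *v v) \<le> (1/2)^m * l1 v" using norm_l1 that order_trans by blast
    also have "\<dots> \<le> (1/2)^m * (2 * norm v)" using l1_norm by (simp add: mult_left_mono)
    finally show ?thesis by simp
  qed
  show ?thesis
    unfolding anosov_family_torus_def
  proof (intro conjI ints, rule exI[of _ "\<lambda>i x. Es i"], rule exI[of _ "\<lambda>i x. Eu i"], intro conjI)
    show "\<forall>i x. subspace (Es i) \<and> subspace (Eu i) \<and> Es i \<inter> Eu i = {0} \<and> (\<forall>v. \<exists>a\<in>Es i. \<exists>b\<in>Eu i. v = a + b)"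
      using Es_sub Eu_sub inter span by blast
    show "\<forall>i x z. integer_vec z \<longrightarrow> Es i = Es i \<and> Eu i = Eu i" by simp
    show "\<forall>i v. continuous_on UNIV (\<lambda>x. split_proj (Es i) (Eu i) v)" by simp
    show "\<forall>i x. (\<lambda>v. F i *v v) ` Es i = Es (i + 1) \<and> (\<lambda>v. F i *v v) ` Eu i = Eu (i + 1)"
      using inv_s inv_u by blast
    show "\<exists>lam c. 0 < lam \<and> lam < 1 \<and> 0 < c \<and>
      (\<forall>i x n v. 1 \<le> n \<longrightarrow> v \<in> Es i \<longrightarrow> norm (fwd_cocycle F i n *v v) \<le> c * lam ^ n * norm v) \<and>
      (\<forall>i x n v. 1 \<le> n \<longrightarrow> v \<in> Eu i \<longrightarrow> norm (bwd_cocycle F i n *v v) \<le> c * lam ^ n * norm v)"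
    proof (rule exI[of _ "1/2::real"], rule exI[of _ "2::real"], intro conjI allI impI)
      show "0 < (1/2::real)" "(1/2::real) < 1" "0 < (2::real)" by simp_all
    next
      fix i :: int and x :: "real^2" and m :: nat and v
      assume "v \<in> Es i"
      then show "norm (fwd_cocycle F i m *v v) \<le> 2 * (1/2) ^ m * norm v" using rate Es_contr by blast
    next
      fix i :: int and x :: "real^2" and m :: nat and v
      assume "v \<in> Eu i"
      then show "norm (bwd_cocycle F i m *v v) \<le> 2 * (1/2) ^ m * norm v" using rate Eu_contr by blast
    qed
  qed
qed

end
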